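(* For every positive integer $t$, $r_t\ge\frac13$.
   Context: A voter matrix with $t$ topics is a matrix $V\in\{Y,N\}^{n\times t}$ for some positive integer $n$ (rows are voters), subject to the standing assumption that in every column the number of entries $Y$ is at least the number of entries $N$. $\mathcal{V}_t$ is the set of all voter matrices with $t$ topics and any number of voters. A proposal is a vector $p\in\{Y,N\}^t$. A voter $v$ supports $p$ if the Hamming distance between $v$ and $p$ is at most $t/2$; $p$ is supported by $V$ if at least $n/2$ rows of $V$ support $p$. For $i=1,\dots,t$ let $m_i$ be the fraction of entries $Y$ in column $i$ of $V$, and $m_V=\frac1t\sum_i m_i$. For a proposal $p$ let $m_i'=m_i$ if $p_i=Y$ and $m_i'=1-m_i$ if $p_i=N$; set $R_p=\frac1t\sum_i m_i'$ and $r_p=R_p/m_V$. Let $r_V=\max r_p$ over all proposals $p$ supported by $V$, and $r_t=\inf_{V\in\mathcal{V}_t} r_V$. *)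

theory Defs
  imports Complex_Main
begin

text \<open>Entries: True = Y, False = N. A voter matrix is a nonempty list of rows
(voters), each row a list of length t.\<close>

definition countY :: "bool list list \<Rightarrow> nat \<Rightarrow> nat" where
  "countY V j = card {i. i < length V \<and> V ! i ! j}"

definition voter_matrix :: "nat \<Rightarrow> bool list list \<Rightarrow> bool" where
  "voter_matrix t V \<longleftrightarrow> V \<noteq> [] \<and> (\<forall>v\<in>set V. length v = t) \<and>
     (\<forall>j<t. countY V j \<ge> length V - countY V j)"

definition hamming :: "nat \<Rightarrow> bool list \<Rightarrow> bool list \<Rightarrow> nat" where
  "hamming t v p = card {j. j < t \<and> v ! j \<noteq> p ! j}"

definition supports :: "nat \<Rightarrow> bool list \<Rightarrow> bool list \<Rightarrow> bool" where
  "supports t v p \<longleftrightarrow> real (hamming t v p) \<le> real t / 2"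

definition supported :: "nat \<Rightarrow> bool list list \<Rightarrow> bool list \<Rightarrow> bool" where
  "supported t V p \<longleftrightarrow>
     real (card {i. i < length V \<and> supports t (V ! i) p}) \<ge> real (length V) / 2"

definition frac_m :: "bool list list \<Rightarrow> nat \<Rightarrow> real" where
  "frac_m V j = real (countY V j) / real (length V)"

definition m_V :: "nat \<Rightarrow> bool list list \<Rightarrow> real" where
  "m_V t V = (\<Sum>j<t. frac_m V j) / real t"

definition R_p :: "nat \<Rightarrow> bool list list \<Rightarrow> bool list \<Rightarrow> real" where
  "R_p t V p = (\<Sum>j<t. if p ! j then frac_m V j else 1 - frac_m V j) / real t"

definition r_p :: "nat \<Rightarrow> bool list list \<Rightarrow> bool list \<Rightarrow> real" where
  "r_p t V p = R_p t V p / m_V t V"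

definition r_V :: "nat \<Rightarrow> bool list list \<Rightarrow> real" where
  "r_V t V = Max (r_p t V ` {p. length p = t \<and> supported t V p})"

definition r_t :: "nat \<Rightarrow> real" where
  "r_t t = Inf (r_V t ` {V. voter_matrix t V})"

end

theory Submission
  imports Defs
begin

lemma card_filter_sum:
  fixes t :: nat
  shows "real (card {j. j < t \<and> P j}) = (\<Sum>j<t. if P j then 1 else 0)"
proof -
  have "{j. j < t \<and> P j} = {j\<in>{..<t}. P j}" by auto
  moreover have "sum (\<lambda>_. (1::real)) {j\<in>{..<t}. P j} = (\<Sum>j<t. if P j then 1 else 0)"
    by (rule sum.inter_filter) simp
  ultimately show ?thesis by simp
qed

lemma card_compl_lt:
  fixes t :: nat
  shows "real (card {j. j < t \<and> \<not> P j}) = real t - real (card {j. j < t \<and> P j})"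
proof -
  have "{j. j < t \<and> \<not> P j} \<union> {j. j < t \<and> P j} = {..<t}" by auto
  moreover have "card ({j. j < t \<and> \<not> P j} \<union> {j. j < t \<and> P j}) =
     card {j. j < t \<and> \<not> P j} + card {j. j < t \<and> P j}"
    by (rule card_Un_disjoint) auto
  ultimately show ?thesis by simp
qed

lemma rV_bound:
  assumes t: "0 < t" and V: "voter_matrix t V"
  shows "r_V t V \<ge> 1/3"
proof -
  define n where "n = length V"
  have n: "n > 0" using V unfolding voter_matrix_def n_def by auto
  have len: "\<And>i. i < n \<Longrightarrow> length (V ! i) = t" using V unfolding voter_matrix_def n_def by auto
  define Y where "Y = replicate t True"
  define N where "N = replicate t False"
  define hY where "hY i = hamming t (V ! i) Y" for i
  have hY: "real (hY i) = (\<Sum>j<t. if \<not> V ! i ! j then 1 else 0)" for i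
  proof -
    have "{j. j < t \<and> V ! i ! j \<noteq> Y ! j} = {j. j < t \<and> \<not> V ! i ! j}" by (auto simp: Y_def)
    then show ?thesis unfolding hY_def hamming_def using card_filter_sum by simp
  qed
  have hN: "real (hamming t (V ! i) N) = real t - hY i" for i
  proof -
    have "{j. j < t \<and> V ! i ! j \<noteq> N ! j} = {j. j < t \<and> \<not> \<not> V ! i ! j}" by (auto simp: N_def)
    moreover have "{j. j < t \<and> V ! i ! j \<noteq> Y ! j} = {j. j < t \<and> \<not> V ! i ! j}" by (auto simp: Y_def)
    ultimately show ?thesis unfolding hY_def hamming_def
      using card_compl_lt[of t "\<lambda>j. \<not> V ! i ! j"] by simp
  qed
  define SY where "SY = {i. i < n \<and> supports t (V ! i) Y}"
  define SN where "SN = {i. i < n \<and> supports t (V ! i) N}"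
  have cover: "SY \<union> SN = {..<n}"
  proof -
    have "supports t (V ! i) Y \<or> supports t (V ! i) N" for i
      unfolding supports_def using hN[of i] hY_def by (cases "real (hY i) \<le> real t / 2") auto
    then show ?thesis unfolding SY_def SN_def by auto
  qed
  have "n \<le> card SY + card SN"
    using card_Un_le[of SY SN] cover by simp
  have fr: "frac_m V j \<ge> 1/2" if "j < t" for j
  proof -
    have "countY V j \<ge> n - countY V j" using V that unfolding voter_matrix_def n_def by auto
    then have "2 * real (countY V j) \<ge> real n" by linarith
    then show ?thesis unfolding frac_m_def n_def[symmetric] using n by (simp add: field_simps)
  qed
  define m where "m = m_V t V"
  have m_half: "m \<ge> 1/2"
  proof -
    have "(\<Sum>j<t. frac_m V j) \<ge> (\<Sum>j<t. 1/2)" by (rule sum_mono) (use fr in auto)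
    then show ?thesis unfolding m_def m_V_def using t by (simp add: field_simps)
  qed
  have fin: "finite {p. length p = t \<and> supported t V p}"
  proof -
    have "finite {xs. set xs \<subseteq> (UNIV::bool set) \<and> length xs = t}"
      by (rule finite_lists_length_eq) simp
    then show ?thesis by (rule rev_finite_subset) auto
  qed
  have key: "\<exists>p. length p = t \<and> supported t V p \<and> r_p t V p \<ge> 1/3"
  proof (cases "supported t V Y")
    case True
    have "R_p t V Y = m" unfolding R_p_def m_def m_V_def Y_def by simp
    then have "r_p t V Y = 1" unfolding r_p_def m_def[symmetric] using m_half by simp
    then show ?thesis using True by (intro exI[of _ Y]) (auto simp: Y_def)
  next
    case False
    then have cY: "real (card SY) < real n / 2" unfolding supported_def SY_def n_def by auto
    then have cN: "real (card SN) \<ge> real n / 2" using \<open>n \<le> card SY + card SN\<close> by linarith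
    then have suppN: "supported t V N" unfolding supported_def SN_def n_def by auto
    \<comment> \<open>Markov\<close>
    define C where "C = {..<n} - SY"
    have cC: "real (card C) > real n / 2"
    proof -
      have "card C = n - card SY" unfolding C_def by (subst card_Diff_subset) (auto simp: SY_def)
      moreover have "card SY \<le> n" using card_mono[of "{..<n}" SY] by (auto simp: SY_def)
      ultimately show ?thesis using cY by simp
    qed
    have Cgt: "real (hY i) > real t / 2" if "i \<in> C" for i
      using that unfolding C_def SY_def supports_def hY_def by auto
    have "(\<Sum>i\<in>C. real t / 2) < (\<Sum>i\<in>C. real (hY i))"
    proof (rule sum_strict_mono)
      show "finite C" unfolding C_def by simp
      show "C \<noteq> {}" using cC by auto
    qed (use Cgt in auto)
    also have "\<dots> \<le> (\<Sum>i<n. real (hY i))"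
      by (rule sum_mono2) (auto simp: C_def)
    finally have A: "real (card C) * (real t / 2) < (\<Sum>i<n. real (hY i))" by simp
    have "real n / 2 * (real t / 2) \<le> real (card C) * (real t / 2)"
      using cC t by (intro mult_right_mono) auto
    with A have B: "real n * real t / 4 < (\<Sum>i<n. real (hY i))" by simp
    have "(\<Sum>i<n. real (hY i)) = (\<Sum>i<n. \<Sum>j<t. if \<not> V ! i ! j then 1 else 0)"
      using hY by simp
    also have "\<dots> = (\<Sum>j<t. \<Sum>i<n. if \<not> V ! i ! j then 1 else 0)" by (rule sum.swap)
    also have "\<dots> = (\<Sum>j<t. real n - real (countY V j))"
    proof (rule sum.cong[OF refl])
      fix j
      have "(\<Sum>i<n. if \<not> V ! i ! j then 1 else 0) = real (card {i. i < n \<and> \<not> V ! i ! j})"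
        using card_filter_sum[of n "\<lambda>i. \<not> V ! i ! j"] by simp
      also have "\<dots> = real n - real (countY V j)"
        using card_compl_lt[of n "\<lambda>i. V ! i ! j"] unfolding countY_def n_def by simp
      finally show "(\<Sum>i<n. if \<not> V ! i ! j then 1 else 0) = real n - real (countY V j)" .
    qed
    also have "\<dots> = real n * real t - real n * (\<Sum>j<t. frac_m V j)"
      using n by (simp add: sum_subtractf frac_m_def n_def[symmetric] sum_distrib_left)
    also have "\<dots> = real n * real t * (1 - m)"
      using t unfolding m_def m_V_def by (simp add: field_simps)
    finally have "real n * real t / 4 < real n * real t * (1 - m)" using B by simp
    then have m4: "real n * real t * (1/4) < real n * real t * (1 - m)" by simp
    have pos: "0 < real n * real t" using n t by simp
    have "1/4 < 1 - m" using mult_less_cancel_left_pos[OF pos] m4 by blast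
    then have m34: "m < 3/4" by simp
    have "R_p t V N = (\<Sum>j<t. 1 - frac_m V j) / real t" unfolding R_p_def N_def by simp
    also have "\<dots> = 1 - m" using t unfolding m_def m_V_def by (simp add: sum_subtractf field_simps)
    finally have "r_p t V N = (1 - m) / m" unfolding r_p_def m_def by simp
    also have "\<dots> \<ge> 1/3" using m_half m34 by (simp add: field_simps)
    finally show ?thesis using suppN by (intro exI[of _ N]) (auto simp: N_def)
  qed
  then obtain p where p: "length p = t" "supported t V p" "r_p t V p \<ge> 1/3" by blast
  have "r_p t V p \<le> r_V t V" unfolding r_V_def
    by (rule Max_ge) (use fin p in auto)
  then show ?thesis using p by linarith
qed

theorem corollary5p4:
  fixes t :: nat
  assumes "0 < t"
  shows "r_t t \<ge> 1 / 3"
proof -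
  have "{i. i < length [replicate t True] \<and> [replicate t True] ! i ! j} = {0}" if "j < t" for j
    using that by auto
  then have "voter_matrix t [replicate t True]" unfolding voter_matrix_def countY_def by auto
  then have ne: "r_V t ` {V. voter_matrix t V} \<noteq> {}" by auto
  show ?thesis unfolding r_t_def
    by (rule cInf_greatest[OF ne]) (use rV_bound assms in auto)
qed

end
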